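(* Let $\Omega,\Omega^*$ be compact metric spaces, $c\in C(\Omega\times\Omega^* )$, and $h_0,h_1\colon[0,+\infty)\to[0,+\infty)$ two finite-valued entropy functions. Let $\mu_1,\mu_2\in\mathcal M_+(\Omega)$, $\nu\in\mathcal M_+(\Omega^* )$, and $\phi_i\in\Phi_{h,c}(\mu_i,\nu)$ for $i=1,2$. Let $U$ be a Borel subset of $\Omega$ and suppose that $\mu_1\leq\mu_2$ on $U$ and $\phi_1\leq\phi_2$ on $\Omega\setminus U$. Then \[ \phi_1\wedge\phi_2\in\Phi_{h,c}(\mu_1,\nu)\quad\text{and}\quad\phi_1\vee\phi_2\in\Phi_{h,c}(\mu_2,\nu). \] Additionally, $-h_0^*(-\phi_1(x))\leq-h_0^*(-\phi_2(x))$ for $x\in\operatorname{supp}(\mu_2-\mu_1)$.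
   Context: An entropy function is a proper, convex, lower semicontinuous $h\colon[0,\infty)\to[0,\infty]$ with $h(s)/s\to+\infty$ as $s\to\infty$; $h^*(r)=\sup_{s\geq0}rs-h(s)$ is its convex conjugate (finite and nondecreasing). For $m\in\mathcal M_+$ (finite positive Borel measures), the internal energy is $H_{h,m}(\rho)=\int h(d\rho/dm)\,dm$ if $\rho$ is positive and $\rho\ll m$, $+\infty$ otherwise. The unbalanced cost is $\mathcal{UT}_{h,c}(\mu,\nu)=\inf_{\pi\in\mathcal M_+(\Omega\times\Omega^* )}H_{h_0,\mu}(\pi_0)+H_{h_1,\nu}(\pi_1)+\int c\,d\pi$, with $\pi_0,\pi_1$ the marginals of $\pi$. With $\phi^c(y)=\sup_{x\in\Omega}\phi(x)-c(x,y)$, by duality $\mathcal{UT}_{h,c}(\mu,\nu)=\sup_{\phi\in C(\Omega)}\int_\Omega-h_0^*(-\phi)\,d\mu-\int_{\Omega^*}h_1^*(\phi^c)\,d\nu$, and $\Phi_{h,c}(\mu,\nu)$ is the set of $\phi\in C(\Omega)$ for which $\int_\Omega-h_0^*(-\phi)\,d\mu-\int_{\Omega^*}h_1^*(\phi^c)\,d\nu=\mathcal{UT}_{h,c}(\mu,\nu)$. $\wedge,\vee$ are pointwise min/max; "$\mu_1\leq\mu_2$ on $U$" means $\mu_1(A)\leq\mu_2(A)$ for all Borel $A\subset U$; the support of a signed measure is that of its total variation. *)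

theory Defs
  imports "HOL-Analysis.Analysis"
begin

text \<open>Finite-valued entropy function on [0,+infinity): nonnegative, convex,
 lower semicontinuous on [0,+infinity), superlinear at infinity.
 Values outside [0,+infinity) are irrelevant.\<close>
definition entropy_fun :: "(real \<Rightarrow> real) \<Rightarrow> bool" where
  "entropy_fun h \<longleftrightarrow>
     (\<forall>s\<ge>0. h s \<ge> 0) \<and> convex_on {0..} h \<and>
     (\<forall>s\<ge>0. \<forall>t. (\<forall>\<^sub>F u in at s within {0..}. h u > t) \<or> h s \<le> t) \<and>
     filterlim (\<lambda>s. h s / s) at_top at_top"

definition conj_fun :: "(real \<Rightarrow> real) \<Rightarrow> real \<Rightarrow> real" where
  "conj_fun h r = (SUP s\<in>{0..}. r * s - h s)"

definition fin_borel_measures :: "'a::topological_space measure set" where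
  "fin_borel_measures = {m. sets m = sets borel \<and> finite_measure m}"

text \<open>Internal energy H_{h,m}(rho) (positivity of rho is built into the type).\<close>
definition int_energy :: "(real \<Rightarrow> real) \<Rightarrow> 'a measure \<Rightarrow> 'a measure \<Rightarrow> ennreal" where
  "int_energy h m \<rho> =
     (if absolutely_continuous m \<rho>
      then (\<integral>\<^sup>+ x. ennreal (h (enn2real (RN_deriv m \<rho> x))) \<partial>m)
      else \<infinity>)"

definition UT :: "(real \<Rightarrow> real) \<Rightarrow> (real \<Rightarrow> real) \<Rightarrow> ('a::metric_space \<Rightarrow> 'b::metric_space \<Rightarrow> real)
    \<Rightarrow> 'a measure \<Rightarrow> 'b measure \<Rightarrow> ereal" where
  "UT h0 h1 c \<mu> \<nu> =
     (INF \<pi>\<in>fin_borel_measures.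
        enn2ereal (int_energy h0 \<mu> (distr \<pi> borel fst))
      + enn2ereal (int_energy h1 \<nu> (distr \<pi> borel snd))
      + ereal (\<integral>p. c (fst p) (snd p) \<partial>\<pi>))"

definition c_transform :: "('a \<Rightarrow> 'b \<Rightarrow> real) \<Rightarrow> ('a \<Rightarrow> real) \<Rightarrow> 'b \<Rightarrow> real" where
  "c_transform c \<phi> y = (SUP x. \<phi> x - c x y)"

definition dual_fun :: "(real \<Rightarrow> real) \<Rightarrow> (real \<Rightarrow> real) \<Rightarrow> ('a::metric_space \<Rightarrow> 'b::metric_space \<Rightarrow> real)
    \<Rightarrow> 'a measure \<Rightarrow> 'b measure \<Rightarrow> ('a \<Rightarrow> real) \<Rightarrow> real" where
  "dual_fun h0 h1 c \<mu> \<nu> \<phi> =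
     (\<integral>x. - conj_fun h0 (- \<phi> x) \<partial>\<mu>) - (\<integral>y. conj_fun h1 (c_transform c \<phi> y) \<partial>\<nu>)"

definition Phi :: "(real \<Rightarrow> real) \<Rightarrow> (real \<Rightarrow> real) \<Rightarrow> ('a::metric_space \<Rightarrow> 'b::metric_space \<Rightarrow> real)
    \<Rightarrow> 'a measure \<Rightarrow> 'b measure \<Rightarrow> ('a \<Rightarrow> real) set" where
  "Phi h0 h1 c \<mu> \<nu> =
     {\<phi>. continuous_on UNIV \<phi> \<and> ereal (dual_fun h0 h1 c \<mu> \<nu> \<phi>) = UT h0 h1 c \<mu> \<nu>}"

definition tot_var :: "'a::topological_space measure \<Rightarrow> 'a measure \<Rightarrow> 'a set \<Rightarrow> real" where
  "tot_var \<mu>1 \<mu>2 E =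
     (SUP P\<in>{P. finite P \<and> P \<subseteq> sets borel \<and> disjoint P \<and> \<Union>P = E}.
        \<Sum>A\<in>P. \<bar>measure \<mu>1 A - measure \<mu>2 A\<bar>)"

definition supp_diff :: "'a::topological_space measure \<Rightarrow> 'a measure \<Rightarrow> 'a set" where
  "supp_diff \<mu>2 \<mu>1 = {x. \<forall>V. open V \<and> x \<in> V \<longrightarrow> tot_var \<mu>2 \<mu>1 V > 0}"

end

theory Submission
  imports Defs
begin

lemma conj_bdd:
  assumes "entropy_fun h"
  shows "bdd_above ((\<lambda>s. r * s - h s) ` {0..})"
proof -
  have nn: "\<And>s. s \<ge> 0 \<Longrightarrow> h s \<ge> 0" using assms by (auto simp: entropy_fun_def)
  have lim: "filterlim (\<lambda>s. h s / s) at_top at_top" using assms by (auto simp: entropy_fun_def)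
  then have "\<forall>\<^sub>F s in at_top. h s / s \<ge> r" by (simp add: filterlim_at_top)
  moreover have "\<forall>\<^sub>F s in at_top. s > (0::real)" by (rule eventually_gt_at_top)
  ultimately have "\<forall>\<^sub>F s in at_top. h s / s \<ge> r \<and> s > 0" by (rule eventually_conj)
  then obtain S where S: "\<And>s. s \<ge> S \<Longrightarrow> h s / s \<ge> r \<and> s > 0" by (auto simp: eventually_at_top_linorder)
  have "r * s - h s \<le> \<bar>r\<bar> * \<bar>S\<bar>" if "s \<ge> 0" for s
  proof (cases "s \<ge> S")
    case True
    obtain a: "r \<le> h s / s" and b: "0 < s" using S[OF True] by blast
    have "h s \<ge> r * s" using a b by (simp add: pos_le_divide_eq)
    moreover have "\<bar>r\<bar> * \<bar>S\<bar> \<ge> 0" by simp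
    ultimately show ?thesis by linarith
  next
    case False
    then have "r * s \<le> \<bar>r\<bar> * \<bar>S\<bar>" using that
    proof -
      have "r * s \<le> \<bar>r\<bar> * s" using that by (intro mult_right_mono) auto
      also have "\<dots> \<le> \<bar>r\<bar> * \<bar>S\<bar>" using that False by (intro mult_left_mono) auto
      finally show ?thesis .
    qed
    then show ?thesis using nn[OF that] by linarith
  qed
  then show ?thesis by (intro bdd_aboveI2[where M="\<bar>r\<bar> * \<bar>S\<bar>"]) auto
qed

lemma conj_upper:
  assumes "entropy_fun h" "s \<ge> 0"
  shows "r * s - h s \<le> conj_fun h r"
  unfolding conj_fun_def using conj_bdd[OF assms(1)] assms(2)
  by (intro cSUP_upper) auto

lemma conj_least:
  assumes "\<And>s. s \<ge> 0 \<Longrightarrow> r * s - h s \<le> M"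
  shows "conj_fun h r \<le> M"
  unfolding conj_fun_def using assms by (intro cSUP_least) auto

lemma conj_mono:
  assumes "entropy_fun h" "r \<le> r'"
  shows "conj_fun h r \<le> conj_fun h r'"
proof (rule conj_least)
  fix s :: real assume "s \<ge> 0"
  then have "r * s - h s \<le> r' * s - h s" using assms(2) by (simp add: mult_right_mono)
  also have "\<dots> \<le> conj_fun h r'" using conj_upper[OF assms(1) \<open>s \<ge> 0\<close>] .
  finally show "r * s - h s \<le> conj_fun h r'" .
qed

lemma conj_convex:
  assumes "entropy_fun h"
  shows "convex_on UNIV (conj_fun h)"
proof (rule convex_onI)
  fix t x y :: real assume t: "0 < t" "t < 1"
  show "conj_fun h ((1 - t) *\<^sub>R x + t *\<^sub>R y) \<le> (1 - t) * conj_fun h x + t * conj_fun h y"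
  proof (rule conj_least)
    fix s :: real assume s: "s \<ge> 0"
    have "((1 - t) *\<^sub>R x + t *\<^sub>R y) * s - h s = (1 - t) * (x * s - h s) + t * (y * s - h s)"
      by (simp add: algebra_simps)
    also have "\<dots> \<le> (1 - t) * conj_fun h x + t * conj_fun h y"
      using conj_upper[OF assms s, of x] conj_upper[OF assms s, of y] t
      by (intro add_mono mult_left_mono) auto
    finally show "((1 - t) *\<^sub>R x + t *\<^sub>R y) * s - h s \<le> (1 - t) * conj_fun h x + t * conj_fun h y" .
  qed
next show "convex (UNIV::real set)" by (rule convex_UNIV)
qed

lemma conj_cont:
  assumes "entropy_fun h"
  shows "continuous_on UNIV (conj_fun h)"
  using convex_on_continuous[OF open_UNIV conj_convex[OF assms]] .

lemma cont_bound:
  fixes f :: "'a::metric_space \<Rightarrow> real"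
  assumes "compact (UNIV::'a set)" "continuous_on UNIV f"
  obtains B where "\<And>x. \<bar>f x\<bar> \<le> B"
proof -
  have "compact (range f)" by (rule compact_continuous_image[OF assms(2) assms(1)])
  then have "bounded (range f)" by (rule compact_imp_bounded)
  then obtain B where "\<forall>y\<in>range f. norm y \<le> B" by (auto simp: bounded_iff)
  then show ?thesis using that by auto
qed

lemma compact_prod_UNIV:
  assumes "compact (UNIV::'a::metric_space set)" "compact (UNIV::'b::metric_space set)"
  shows "compact (UNIV::('a \<times> 'b) set)"
  using compact_Times[OF assms] by simp

lemma ct_bdd:
  fixes c :: "'a::metric_space \<Rightarrow> 'b::metric_space \<Rightarrow> real"
  assumes "\<And>x. \<bar>\<phi> x\<bar> \<le> B" "\<And>x y. \<bar>c x y\<bar> \<le> C"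
  shows "bdd_above ((\<lambda>x. \<phi> x - c x y) ` UNIV)"
proof (rule bdd_aboveI2[where M="B + C"])
  fix x show "\<phi> x - c x y \<le> B + C" using assms(1)[of x] assms(2)[of x y] by linarith
qed

lemma ct_upper:
  fixes c :: "'a::metric_space \<Rightarrow> 'b::metric_space \<Rightarrow> real"
  assumes "\<And>x. \<bar>\<phi> x\<bar> \<le> B" "\<And>x y. \<bar>c x y\<bar> \<le> C"
  shows "\<phi> x - c x y \<le> c_transform c \<phi> y"
  unfolding c_transform_def by (rule cSUP_upper[OF _ ct_bdd[OF assms]]) simp

lemma ct_bound:
  fixes c :: "'a::metric_space \<Rightarrow> 'b::metric_space \<Rightarrow> real"
  assumes "\<And>x. \<bar>\<phi> x\<bar> \<le> B" "\<And>x y. \<bar>c x y\<bar> \<le> C"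
  shows "\<bar>c_transform c \<phi> y\<bar> \<le> B + C"
proof -
  have "c_transform c \<phi> y \<le> B + C" unfolding c_transform_def
    using assms by (intro cSUP_least) (auto, smt (verit))
  moreover have "\<phi> undefined - c undefined y \<le> c_transform c \<phi> y" by (rule ct_upper[OF assms, where x=undefined and y=y])
  moreover have "\<phi> undefined - c undefined y \<ge> - B - C" using assms(1)[of undefined] assms(2)[of undefined y] by linarith
  ultimately show ?thesis by linarith
qed

lemma ct_cont:
  fixes c :: "'a::metric_space \<Rightarrow> 'b::metric_space \<Rightarrow> real"
  assumes cA: "compact (UNIV::'a set)" and cB: "compact (UNIV::'b set)"
    and cc: "continuous_on UNIV (\<lambda>p. c (fst p) (snd p))"
    and B: "\<And>x. \<bar>\<phi> x\<bar> \<le> B" and C: "\<And>x y. \<bar>c x y\<bar> \<le> C"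
  shows "continuous_on UNIV (c_transform c \<phi>)"
proof -
  have up: "\<And>x y. \<phi> x - c x y \<le> c_transform c \<phi> y" by (rule ct_upper[OF B C])
  have uc: "uniformly_continuous_on UNIV (\<lambda>p. c (fst p) (snd p))"
    by (rule compact_uniformly_continuous[OF cc compact_prod_UNIV[OF cA cB]])
  have "uniformly_continuous_on UNIV (c_transform c \<phi>)"
    unfolding uniformly_continuous_on_def
  proof (intro allI impI)
    fix e :: real assume e: "e > 0"
    obtain d where d: "d > 0" and dd: "\<And>p p'. dist p' p < d \<Longrightarrow> dist (c (fst p') (snd p')) (c (fst p) (snd p)) < e/2"
      using uc e unfolding uniformly_continuous_on_def by (metis UNIV_I half_gt_zero)
    have cl: "\<bar>c x y' - c x y\<bar> < e/2" if "dist y' y < d" for x y y'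
    proof -
      have "dist (x, y') (x, y) = dist y' y" by (simp add: dist_Pair_Pair)
      then show ?thesis using dd[of "(x,y')" "(x,y)"] that by (simp add: dist_real_def)
    qed
    have one: "c_transform c \<phi> y' \<le> c_transform c \<phi> y + e/2" if "dist y' y < d" for y y'
      unfolding c_transform_def[of c \<phi> y']
    proof (rule cSUP_least)
      fix x
      have "\<phi> x - c x y' \<le> \<phi> x - c x y + e/2" using cl[where x=x, OF that] by linarith
      also have "\<dots> \<le> c_transform c \<phi> y + e/2" using up[of x y] by linarith
      finally show "\<phi> x - c x y' \<le> c_transform c \<phi> y + e/2" .
    qed simp
    show "\<exists>d>0. \<forall>x\<in>UNIV. \<forall>x'\<in>UNIV. dist x' x < d \<longrightarrow> dist (c_transform c \<phi> x') (c_transform c \<phi> x) < e"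
    proof (intro exI[of _ d] conjI ballI impI d)
      fix y y' :: 'b assume "dist y' y < d"
      then have "dist y y' < d" by (simp add: dist_commute)
      from one[OF \<open>dist y' y < d\<close>] one[OF this] e
      show "dist (c_transform c \<phi> y') (c_transform c \<phi> y) < e" by (simp add: dist_real_def abs_le_iff)
    qed
  qed
  then show ?thesis by (rule uniformly_continuous_imp_continuous)
qed

lemma conj_bound:
  assumes h: "entropy_fun h" and ub: "\<bar>v\<bar> \<le> B"
  shows "\<bar>conj_fun h v\<bar> \<le> \<bar>conj_fun h (-B)\<bar> + \<bar>conj_fun h B\<bar>"
proof -
  have "conj_fun h (-B) \<le> conj_fun h v" using ub by (intro conj_mono[OF h]) auto
  moreover have "conj_fun h v \<le> conj_fun h B" using ub by (intro conj_mono[OF h]) auto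
  ultimately show ?thesis by linarith
qed

lemma conj_meas:
  assumes h: "entropy_fun h" and u: "u \<in> borel_measurable M"
  shows "(\<lambda>x. conj_fun h (u x)) \<in> borel_measurable M"
  using measurable_compose[OF u borel_measurable_continuous_onI[OF conj_cont[OF h]]] by simp

lemma gen:
  fixes \<mu> \<pi>0 :: "'a measure" and u :: "'a \<Rightarrow> real"
  assumes fm: "finite_measure \<mu>" "finite_measure \<pi>0" and sets: "sets \<pi>0 = sets \<mu>"
    and ac: "absolutely_continuous \<mu> \<pi>0"
    and um: "u \<in> borel_measurable \<mu>" and ub: "\<And>x. \<bar>u x\<bar> \<le> B"
    and h: "entropy_fun h"
    and fin: "(\<integral>\<^sup>+x. ennreal (h (enn2real (RN_deriv \<mu> \<pi>0 x))) \<partial>\<mu>) < \<infinity>"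
  shows "(\<integral>x. - conj_fun h (- u x) \<partial>\<mu>)
     \<le> enn2real (\<integral>\<^sup>+x. ennreal (h (enn2real (RN_deriv \<mu> \<pi>0 x))) \<partial>\<mu>) + (\<integral>x. u x \<partial>\<pi>0)"
proof -
  interpret M: finite_measure \<mu> by (rule fm(1))
  interpret P: finite_measure \<pi>0 by (rule fm(2))
  define g where "g x = enn2real (RN_deriv \<mu> \<pi>0 x)" for x
  have gm: "g \<in> borel_measurable \<mu>" unfolding g_def by measurable
  have d1: "density \<mu> (RN_deriv \<mu> \<pi>0) = \<pi>0" by (rule M.density_RN_deriv[OF ac sets])
  have fin_ae: "AE x in \<mu>. RN_deriv \<mu> \<pi>0 x \<noteq> \<infinity>"
    by (rule M.RN_deriv_finite[OF P.sigma_finite_measure_axioms ac sets])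
  have d2: "density \<mu> (\<lambda>x. ennreal (g x)) = density \<mu> (RN_deriv \<mu> \<pi>0)"
    by (rule density_cong) (use gm fin_ae in \<open>auto simp: g_def less_top\<close>)
  have dens: "density \<mu> (\<lambda>x. ennreal (g x)) = \<pi>0" using d1 d2 by simp
  have um': "u \<in> borel_measurable \<pi>0" using um by (simp add: measurable_cong_sets[OF sets refl])
  have gnn: "AE x in \<mu>. 0 \<le> g x" by (simp add: g_def)
  have ui: "integrable \<pi>0 u" by (rule P.integrable_const_bound[where B=B]) (use ub um' in auto)
  have gui: "integrable \<mu> (\<lambda>x. g x * u x)"
    using integrable_density[OF um gm gnn] ui dens by simp
  have int_eq: "(\<integral>x. u x \<partial>\<pi>0) = (\<integral>x. g x * u x \<partial>\<mu>)"
    using integral_density[OF um gm gnn] dens by simp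
  define K where "K x = - conj_fun h (- u x)" for x
  have Km: "K \<in> borel_measurable \<mu>" unfolding K_def
    using conj_meas[OF h, of "\<lambda>x. - u x" \<mu>] um by simp
  have Kb: "\<bar>K x\<bar> \<le> \<bar>conj_fun h (-B)\<bar> + \<bar>conj_fun h B\<bar>" for x
    unfolding K_def using conj_bound[OF h, of "- u x" B] ub[of x] by simp
  have Ki: "integrable \<mu> K" by (rule M.integrable_const_bound[where B="\<bar>conj_fun h (-B)\<bar> + \<bar>conj_fun h B\<bar>"]) (use Kb Km in auto)
  have FY: "K x - g x * u x \<le> h (g x)" for x
    using conj_upper[OF h, of "g x" "- u x"] unfolding K_def g_def by (simp add: algebra_simps)
  have hnn: "\<And>x. 0 \<le> h (g x)" using h by (simp add: entropy_fun_def g_def)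
  define L where "L x = max 0 (K x - g x * u x)" for x
  have Kg: "integrable \<mu> (\<lambda>x. K x - g x * u x)" by (rule Bochner_Integration.integrable_diff[OF Ki gui])
  have Li: "integrable \<mu> L" unfolding L_def
    by (rule Bochner_Integration.integrable_max[OF integrable_zero Kg])
  have Lm: "L \<in> borel_measurable \<mu>" using Li by (rule borel_measurable_integrable)
  have "(\<integral>x. K x \<partial>\<mu>) - (\<integral>x. u x \<partial>\<pi>0) = (\<integral>x. K x - g x * u x \<partial>\<mu>)"
    using int_eq Ki gui by simp
  also have "\<dots> \<le> (\<integral>x. L x \<partial>\<mu>)" by (rule integral_mono) (use Ki gui Li in \<open>auto simp: L_def\<close>)
  also have "\<dots> = enn2real (\<integral>\<^sup>+x. ennreal (L x) \<partial>\<mu>)"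
    by (rule integral_eq_nn_integral[OF Lm]) (auto simp: L_def)
  also have "\<dots> \<le> enn2real (\<integral>\<^sup>+x. ennreal (h (g x)) \<partial>\<mu>)"
  proof (rule enn2real_mono)
    show "(\<integral>\<^sup>+x. ennreal (L x) \<partial>\<mu>) \<le> (\<integral>\<^sup>+x. ennreal (h (g x)) \<partial>\<mu>)"
      by (rule nn_integral_mono) (use FY hnn in \<open>auto simp: L_def intro!: ennreal_leI\<close>)
    show "(\<integral>\<^sup>+x. ennreal (h (g x)) \<partial>\<mu>) < top" using fin by (simp add: g_def)
  qed
  finally show ?thesis unfolding K_def g_def by simp
qed

lemma enn2ereal_fin: "x < top \<Longrightarrow> enn2ereal x = ereal (enn2real x)"
  by (metis enn2ereal_ennreal enn2real_nonneg ennreal_enn2real)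

lemma meas_borel_cont:
  assumes "sets M = sets borel" "continuous_on UNIV f"
  shows "f \<in> borel_measurable M"
  using borel_measurable_continuous_onI[OF assms(2)] by (simp add: measurable_cong_sets[OF assms(1) refl])

lemma int_bound:
  fixes f :: "'a \<Rightarrow> real"
  assumes "finite_measure M" "f \<in> borel_measurable M" "\<And>x. \<bar>f x\<bar> \<le> B"
  shows "integrable M f"
  by (rule finite_measure.integrable_const_bound[OF assms(1), where B=B]) (use assms in auto)

lemma c_bound:
  fixes c :: "'a::metric_space \<Rightarrow> 'b::metric_space \<Rightarrow> real"
  assumes cA: "compact (UNIV::'a set)" and cB: "compact (UNIV::'b set)"
    and cc: "continuous_on UNIV (\<lambda>p. c (fst p) (snd p))"
  obtains C where "\<And>x y. \<bar>c x y\<bar> \<le> C"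
proof -
  obtain C where C: "\<And>p. \<bar>c (fst p) (snd p)\<bar> \<le> C"
    using cont_bound[OF compact_prod_UNIV[OF cA cB] cc] by blast
  show ?thesis using that C[of "(x,y)" for x y] by auto
qed

lemma WD:
  fixes c :: "'a::metric_space \<Rightarrow> 'b::metric_space \<Rightarrow> real"
  assumes cA: "compact (UNIV::'a set)" and cB: "compact (UNIV::'b set)"
    and cc: "continuous_on UNIV (\<lambda>p. c (fst p) (snd p))"
    and h0: "entropy_fun h0" and h1: "entropy_fun h1"
    and mu: "\<mu> \<in> fin_borel_measures" and nu: "\<nu> \<in> fin_borel_measures"
    and phic: "continuous_on UNIV \<phi>"
  shows "ereal (dual_fun h0 h1 c \<mu> \<nu> \<phi>) \<le> UT h0 h1 c \<mu> \<nu>"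
proof -
  obtain B where B: "\<And>x. \<bar>\<phi> x\<bar> \<le> B" using cont_bound[OF cA phic] by blast
  obtain C where C: "\<And>x y. \<bar>c x y\<bar> \<le> C" using c_bound[OF cA cB cc] by blast
  define \<psi> where "\<psi> = c_transform c \<phi>"
  have psic: "continuous_on UNIV \<psi>" unfolding \<psi>_def by (rule ct_cont[OF cA cB cc B C])
  have psib: "\<And>y. \<bar>\<psi> y\<bar> \<le> B + C" unfolding \<psi>_def by (rule ct_bound[OF B C])
  have psiu: "\<And>x y. \<phi> x - c x y \<le> \<psi> y" unfolding \<psi>_def by (rule ct_upper[OF B C])
  have musets: "sets \<mu> = sets borel" and mufin: "finite_measure \<mu>" using mu by (auto simp: fin_borel_measures_def)
  have nusets: "sets \<nu> = sets borel" and nufin: "finite_measure \<nu>" using nu by (auto simp: fin_borel_measures_def)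
  show ?thesis unfolding UT_def
  proof (rule INF_greatest)
    fix \<pi> :: "('a \<times> 'b) measure" assume pi: "\<pi> \<in> fin_borel_measures"
    have pisets: "sets \<pi> = sets borel" and pifin: "finite_measure \<pi>" using pi by (auto simp: fin_borel_measures_def)
    define \<pi>0 where "\<pi>0 = distr \<pi> borel fst"
    define \<pi>1 where "\<pi>1 = distr \<pi> borel snd"
    have fstm: "fst \<in> measurable \<pi> borel"
      by (rule meas_borel_cont[OF pisets]) (intro continuous_intros)
    have sndm: "snd \<in> measurable \<pi> borel"
      by (rule meas_borel_cont[OF pisets]) (intro continuous_intros)
    have p0fin: "finite_measure \<pi>0" unfolding \<pi>0_def by (rule finite_measure.finite_measure_distr[OF pifin fstm])
    have p1fin: "finite_measure \<pi>1" unfolding \<pi>1_def by (rule finite_measure.finite_measure_distr[OF pifin sndm])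
    have p0sets: "sets \<pi>0 = sets \<mu>" unfolding \<pi>0_def using musets by simp
    have p1sets: "sets \<pi>1 = sets \<nu>" unfolding \<pi>1_def using nusets by simp
    define E where "E = enn2ereal (int_energy h0 \<mu> (distr \<pi> borel fst)) + enn2ereal (int_energy h1 \<nu> (distr \<pi> borel snd))
        + ereal (\<integral>p. c (fst p) (snd p) \<partial>\<pi>)"
    have "ereal (dual_fun h0 h1 c \<mu> \<nu> \<phi>) \<le> E"
    proof (cases "int_energy h0 \<mu> \<pi>0 < top \<and> int_energy h1 \<nu> \<pi>1 < top")
      case False
      then have "int_energy h0 \<mu> \<pi>0 = top \<or> int_energy h1 \<nu> \<pi>1 = top" using top.not_eq_extremum by blast
      then have "E = \<infinity>" unfolding E_def \<pi>0_def[symmetric] \<pi>1_def[symmetric] by auto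
      then show ?thesis by simp
    next
      case True
      then have H0: "int_energy h0 \<mu> \<pi>0 < top" and H1: "int_energy h1 \<nu> \<pi>1 < top" by auto
      have ac0: "absolutely_continuous \<mu> \<pi>0" using H0 by (auto simp: int_energy_def split: if_splits)
      have ac1: "absolutely_continuous \<nu> \<pi>1" using H1 by (auto simp: int_energy_def split: if_splits)
      define I0 where "I0 = (\<integral>\<^sup>+x. ennreal (h0 (enn2real (RN_deriv \<mu> \<pi>0 x))) \<partial>\<mu>)"
      define I1 where "I1 = (\<integral>\<^sup>+x. ennreal (h1 (enn2real (RN_deriv \<nu> \<pi>1 x))) \<partial>\<nu>)"
      have e0: "int_energy h0 \<mu> \<pi>0 = I0" using ac0 by (simp add: int_energy_def I0_def)
      have e1: "int_energy h1 \<nu> \<pi>1 = I1" using ac1 by (simp add: int_energy_def I1_def)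
      have phim: "\<phi> \<in> borel_measurable \<mu>" by (rule meas_borel_cont[OF musets phic])
      have psim: "(\<lambda>y. - \<psi> y) \<in> borel_measurable \<nu>" by (rule meas_borel_cont[OF nusets]) (intro continuous_intros psic)
      have g0: "(\<integral>x. - conj_fun h0 (- \<phi> x) \<partial>\<mu>) \<le> enn2real I0 + (\<integral>x. \<phi> x \<partial>\<pi>0)"
        unfolding I0_def by (rule gen[OF mufin p0fin p0sets ac0 phim B h0]) (use H0 e0 I0_def in simp)
      have g1: "(\<integral>y. - conj_fun h1 (- (- \<psi> y)) \<partial>\<nu>) \<le> enn2real I1 + (\<integral>y. - \<psi> y \<partial>\<pi>1)"
        unfolding I1_def by (rule gen[OF nufin p1fin p1sets ac1 psim _ h1]) (use H1 e1 I1_def psib in auto)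
      have phim': "\<phi> \<in> borel_measurable borel" by (rule borel_measurable_continuous_onI[OF phic])
      have psim': "(\<lambda>y. - \<psi> y) \<in> borel_measurable borel" by (rule borel_measurable_continuous_onI) (intro continuous_intros psic)
      have i0: "(\<integral>x. \<phi> x \<partial>\<pi>0) = (\<integral>p. \<phi> (fst p) \<partial>\<pi>)"
        unfolding \<pi>0_def by (rule integral_distr[OF fstm phim'])
      have i1: "(\<integral>y. - \<psi> y \<partial>\<pi>1) = (\<integral>p. - \<psi> (snd p) \<partial>\<pi>)"
        unfolding \<pi>1_def by (rule integral_distr[OF sndm psim'])
      have ia: "integrable \<pi> (\<lambda>p. \<phi> (fst p))"
        by (rule int_bound[OF pifin measurable_compose[OF fstm phim'] B])
      have ib: "integrable \<pi> (\<lambda>p. - \<psi> (snd p))"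
        by (rule int_bound[OF pifin measurable_compose[OF sndm psim'], where B="B + C"]) (use psib in auto)
      have ic: "integrable \<pi> (\<lambda>p. c (fst p) (snd p))"
        by (rule int_bound[OF pifin meas_borel_cont[OF pisets cc] C])
      have "(\<integral>p. \<phi> (fst p) \<partial>\<pi>) + (\<integral>p. - \<psi> (snd p) \<partial>\<pi>) = (\<integral>p. \<phi> (fst p) + - \<psi> (snd p) \<partial>\<pi>)"
        by (rule Bochner_Integration.integral_add[symmetric, OF ia ib])
      also have "\<dots> \<le> (\<integral>p. c (fst p) (snd p) \<partial>\<pi>)"
        by (rule integral_mono[OF _ ic]) (use ia ib psiu in \<open>auto simp: algebra_simps\<close>)
      finally have ineq: "(\<integral>p. \<phi> (fst p) \<partial>\<pi>) + (\<integral>p. - \<psi> (snd p) \<partial>\<pi>) \<le> (\<integral>p. c (fst p) (snd p) \<partial>\<pi>)" .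
      have g1': "- (\<integral>y. conj_fun h1 (\<psi> y) \<partial>\<nu>) \<le> enn2real I1 + (\<integral>y. - \<psi> y \<partial>\<pi>1)"
        using g1 by simp
      have D: "dual_fun h0 h1 c \<mu> \<nu> \<phi> \<le> enn2real I0 + enn2real I1 + (\<integral>p. c (fst p) (snd p) \<partial>\<pi>)"
        unfolding dual_fun_def \<psi>_def[symmetric] using g0 g1' ineq i0 i1 by linarith
      have "E = ereal (enn2real I0) + ereal (enn2real I1) + ereal (\<integral>p. c (fst p) (snd p) \<partial>\<pi>)"
        unfolding E_def \<pi>0_def[symmetric] \<pi>1_def[symmetric] e0 e1
        using H0 H1 e0 e1 by (simp add: enn2ereal_fin)
      then show ?thesis using D by simp
    qed
    then show "ereal (dual_fun h0 h1 c \<mu> \<nu> \<phi>) \<le> enn2ereal (int_energy h0 \<mu> (distr \<pi> borel fst)) + enn2ereal (int_energy h1 \<nu> (distr \<pi> borel snd))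
        + ereal (\<integral>p. c (fst p) (snd p) \<partial>\<pi>)" unfolding E_def .
  qed
qed

lemma cmp:
  fixes \<mu>1 \<mu>2 :: "'a::topological_space measure" and k :: "'a \<Rightarrow> real"
  assumes m1: "\<mu>1 \<in> fin_borel_measures" and m2: "\<mu>2 \<in> fin_borel_measures"
    and Ub: "U \<in> sets borel"
    and ord: "\<forall>A\<in>sets borel. A \<subseteq> U \<longrightarrow> emeasure \<mu>1 A \<le> emeasure \<mu>2 A"
    and km: "k \<in> borel_measurable borel" and knn: "\<And>x. 0 \<le> k x" and kb: "\<And>x. \<bar>k x\<bar> \<le> K"
    and kout: "\<And>x. x \<notin> U \<Longrightarrow> k x = 0"
  shows "(\<integral>x. k x \<partial>\<mu>1) \<le> (\<integral>x. k x \<partial>\<mu>2)"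
proof -
  have s1: "sets \<mu>1 = sets borel" and f1: "finite_measure \<mu>1" using m1 by (auto simp: fin_borel_measures_def)
  have s2: "sets \<mu>2 = sets borel" and f2: "finite_measure \<mu>2" using m2 by (auto simp: fin_borel_measures_def)
  have k1: "k \<in> borel_measurable \<mu>1" using km by (simp add: measurable_cong_sets[OF s1 refl])
  have k2: "k \<in> borel_measurable \<mu>2" using km by (simp add: measurable_cong_sets[OF s2 refl])
  have U1: "U \<in> sets \<mu>1" using Ub s1 by simp
  have U2: "U \<in> sets \<mu>2" using Ub s2 by simp
  have i1: "integrable \<mu>1 k" by (rule int_bound[OF f1 k1 kb])
  have i2: "integrable \<mu>2 k" by (rule int_bound[OF f2 k2 kb])
  have n1: "(\<integral>\<^sup>+x. ennreal (k x) \<partial>\<mu>1) = ennreal (\<integral>x. k x \<partial>\<mu>1)"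
    by (rule nn_integral_eq_integral[OF i1]) (simp add: knn)
  have n2: "(\<integral>\<^sup>+x. ennreal (k x) \<partial>\<mu>2) = ennreal (\<integral>x. k x \<partial>\<mu>2)"
    by (rule nn_integral_eq_integral[OF i2]) (simp add: knn)
  have ind: "indicator U x * ennreal (k x) = ennreal (k x)" for x
    using kout[of x] by (cases "x \<in> U") auto
  have d1: "(\<integral>\<^sup>+x. ennreal (k x) \<partial>density \<mu>1 (indicator U)) = (\<integral>\<^sup>+x. ennreal (k x) \<partial>\<mu>1)"
    using U1 k1 by (subst nn_integral_density) (auto simp: ind)
  have d2: "(\<integral>\<^sup>+x. ennreal (k x) \<partial>density \<mu>2 (indicator U)) = (\<integral>\<^sup>+x. ennreal (k x) \<partial>\<mu>2)"
    using U2 k2 by (subst nn_integral_density) (auto simp: ind)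
  have ss: "sets (density \<mu>1 (indicator U)) = sets (density \<mu>2 (indicator U))" using s1 s2 by simp
  have le: "density \<mu>1 (indicator U) \<le> density \<mu>2 (indicator U)"
  proof -
    have sp: "space (density \<mu>1 (indicator U)) = space (density \<mu>2 (indicator U))"
      by (rule sets_eq_imp_space_eq[OF ss])
    have "emeasure (density \<mu>1 (indicator U)) X \<le> emeasure (density \<mu>2 (indicator U)) X" for X
    proof (cases "X \<in> sets borel")
      case True
      then show ?thesis using emeasure_restricted[OF U1, of X] emeasure_restricted[OF U2, of X] ord s1 s2 Ub
        by auto
    next
      case False
      then show ?thesis using s1 s2 by (simp add: emeasure_notin_sets)
    qed
    then show ?thesis using sp ss by (auto simp: le_measure_iff le_fun_def)
  qed
  have "ennreal (\<integral>x. k x \<partial>\<mu>1) \<le> ennreal (\<integral>x. k x \<partial>\<mu>2)"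
    using nn_integral_mono_measure[OF ss le, of "\<lambda>x. ennreal (k x)"] d1 d2 n1 n2 by simp
  moreover have "0 \<le> (\<integral>x. k x \<partial>\<mu>2)" using knn by simp
  ultimately show ?thesis by simp
qed

lemma icont:
  fixes f :: "'a::metric_space \<Rightarrow> real"
  assumes "M \<in> fin_borel_measures" "compact (UNIV::'a set)" "continuous_on UNIV f"
  shows "integrable M f"
proof -
  obtain B where B: "\<And>x. \<bar>f x\<bar> \<le> B" using cont_bound[OF assms(2,3)] by blast
  have "sets M = sets borel" "finite_measure M" using assms(1) by (auto simp: fin_borel_measures_def)
  then show ?thesis by (intro int_bound[OF _ meas_borel_cont[OF _ assms(3)], where B=B]) (auto intro: B)
qed

lemma ct_least:
  "(\<And>x. \<phi> x - c x y \<le> M) \<Longrightarrow> c_transform c \<phi> y \<le> M"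
  unfolding c_transform_def by (rule cSUP_least) auto

lemma conj_comp_cont:
  assumes "entropy_fun h" "continuous_on UNIV f"
  shows "continuous_on UNIV (\<lambda>x. conj_fun h (f x))"
  using continuous_on_compose2[OF conj_cont[OF assms(1)] assms(2)] by simp

theorem theorem3p19:
  fixes c :: "'a::metric_space \<Rightarrow> 'b::metric_space \<Rightarrow> real"
    and h0 h1 :: "real \<Rightarrow> real"
    and \<mu>1 \<mu>2 :: "'a measure" and \<nu> :: "'b measure"
    and \<phi>1 \<phi>2 :: "'a \<Rightarrow> real" and U :: "'a set"
  assumes "compact (UNIV :: 'a set)" and "compact (UNIV :: 'b set)"
    and "continuous_on UNIV (\<lambda>p. c (fst p) (snd p))"
    and "entropy_fun h0" and "entropy_fun h1"
    and "\<mu>1 \<in> fin_borel_measures" and "\<mu>2 \<in> fin_borel_measures" and "\<nu> \<in> fin_borel_measures"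
    and "\<phi>1 \<in> Phi h0 h1 c \<mu>1 \<nu>" and "\<phi>2 \<in> Phi h0 h1 c \<mu>2 \<nu>"
    and "U \<in> sets borel"
    and "\<forall>A\<in>sets borel. A \<subseteq> U \<longrightarrow> emeasure \<mu>1 A \<le> emeasure \<mu>2 A"
    and "\<forall>x. x \<notin> U \<longrightarrow> \<phi>1 x \<le> \<phi>2 x"
  shows "(\<lambda>x. min (\<phi>1 x) (\<phi>2 x)) \<in> Phi h0 h1 c \<mu>1 \<nu>
       \<and> (\<lambda>x. max (\<phi>1 x) (\<phi>2 x)) \<in> Phi h0 h1 c \<mu>2 \<nu>
       \<and> (\<forall>x\<in>supp_diff \<mu>2 \<mu>1. - conj_fun h0 (- \<phi>1 x) \<le> - conj_fun h0 (- \<phi>2 x))"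
proof -
  note cA = assms(1) and cB = assms(2) and cc = assms(3) and h0 = assms(4) and h1 = assms(5)
    and m1 = assms(6) and m2 = assms(7) and nu = assms(8) and Ub = assms(11) and ord = assms(12)
    and outU = assms(13)
  have p1c: "continuous_on UNIV \<phi>1" and eq1: "ereal (dual_fun h0 h1 c \<mu>1 \<nu> \<phi>1) = UT h0 h1 c \<mu>1 \<nu>"
    using assms(9) by (auto simp: Phi_def)
  have p2c: "continuous_on UNIV \<phi>2" and eq2: "ereal (dual_fun h0 h1 c \<mu>2 \<nu> \<phi>2) = UT h0 h1 c \<mu>2 \<nu>"
    using assms(10) by (auto simp: Phi_def)
  define F where "F t = - conj_fun h0 (- t)" for t
  have Fmono: "F a \<le> F b" if "a \<le> b" for a b
    unfolding F_def using conj_mono[OF h0, of "- b" "- a"] that by simp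
  have Fcont: "continuous_on UNIV (\<lambda>x. F (f x))" if "continuous_on UNIV f" for f :: "'a \<Rightarrow> real"
    unfolding F_def by (intro continuous_intros conj_comp_cont[OF h0] that)
  have dualF: "dual_fun h0 h1 c \<mu> \<nu> \<phi> = (\<integral>x. F (\<phi> x) \<partial>\<mu>) - (\<integral>y. conj_fun h1 (c_transform c \<phi> y) \<partial>\<nu>)"
    for \<mu> \<phi> by (simp add: dual_fun_def F_def)
  define \<psi> where "\<psi> = (\<lambda>x. min (\<phi>1 x) (\<phi>2 x))"
  define \<xi> where "\<xi> = (\<lambda>x. max (\<phi>1 x) (\<phi>2 x))"
  have psic: "continuous_on UNIV \<psi>" unfolding \<psi>_def by (intro continuous_intros p1c p2c)
  have chic: "continuous_on UNIV \<xi>" unfolding \<xi>_def by (intro continuous_intros p1c p2c)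
  define g where "g x = F (\<xi> x) - F (\<phi>2 x)" for x
  have gnn: "0 \<le> g x" for x unfolding g_def \<xi>_def using Fmono[of "\<phi>2 x" "max (\<phi>1 x) (\<phi>2 x)"] by simp
  have gc: "continuous_on UNIV g" unfolding g_def by (intro continuous_intros Fcont chic p2c)
  have gout: "g x = 0" if "x \<notin> U" for x using outU that unfolding g_def \<xi>_def by (simp add: max_def)
  have Fpsi: "F (\<psi> x) = F (\<phi>1 x) - g x" for x
    unfolding g_def \<psi>_def \<xi>_def by (cases "\<phi>1 x \<le> \<phi>2 x") (auto simp: min_def max_def)
  have Fchi: "F (\<xi> x) = F (\<phi>2 x) + g x" for x unfolding g_def by simp
  obtain B1 where B1: "\<And>x. \<bar>\<phi>1 x\<bar> \<le> B1" using cont_bound[OF cA p1c] by blast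
  obtain B2 where B2: "\<And>x. \<bar>\<phi>2 x\<bar> \<le> B2" using cont_bound[OF cA p2c] by blast
  obtain B3 where B3: "\<And>x. \<bar>\<psi> x\<bar> \<le> B3" using cont_bound[OF cA psic] by blast
  obtain B4 where B4: "\<And>x. \<bar>\<xi> x\<bar> \<le> B4" using cont_bound[OF cA chic] by blast
  obtain C where C: "\<And>x y. \<bar>c x y\<bar> \<le> C" using c_bound[OF cA cB cc] by blast
  define a1 where "a1 = c_transform c \<phi>1"
  define a2 where "a2 = c_transform c \<phi>2"
  define a3 where "a3 = c_transform c \<psi>"
  define a4 where "a4 = c_transform c \<xi>"
  have a1c: "continuous_on UNIV a1" unfolding a1_def by (rule ct_cont[OF cA cB cc B1 C])
  have a2c: "continuous_on UNIV a2" unfolding a2_def by (rule ct_cont[OF cA cB cc B2 C])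
  have a3c: "continuous_on UNIV a3" unfolding a3_def by (rule ct_cont[OF cA cB cc B3 C])
  have a4c: "continuous_on UNIV a4" unfolding a4_def by (rule ct_cont[OF cA cB cc B4 C])
  have u1: "\<And>x y. \<phi>1 x - c x y \<le> a1 y" unfolding a1_def by (rule ct_upper[OF B1 C])
  have u2: "\<And>x y. \<phi>2 x - c x y \<le> a2 y" unfolding a2_def by (rule ct_upper[OF B2 C])
  have u4: "\<And>x y. \<xi> x - c x y \<le> a4 y" unfolding a4_def by (rule ct_upper[OF B4 C])
  have a3le: "a3 y \<le> min (a1 y) (a2 y)" for y
  proof -
    have "a3 y \<le> a1 y" unfolding a3_def
      by (rule ct_least) (use u1 in \<open>smt (verit) \<psi>_def\<close>)
    moreover have "a3 y \<le> a2 y" unfolding a3_def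
      by (rule ct_least) (use u2 in \<open>smt (verit) \<psi>_def\<close>)
    ultimately show ?thesis by simp
  qed
  have a4eq: "a4 y = max (a1 y) (a2 y)" for y
  proof (rule antisym)
    show "a4 y \<le> max (a1 y) (a2 y)" unfolding a4_def
      by (rule ct_least) (use u1 u2 in \<open>smt (verit) \<xi>_def\<close>)
    have "a1 y \<le> a4 y" unfolding a1_def
      by (rule ct_least) (use u4 in \<open>smt (verit) \<xi>_def\<close>)
    moreover have "a2 y \<le> a4 y" unfolding a2_def
      by (rule ct_least) (use u4 in \<open>smt (verit) \<xi>_def\<close>)
    ultimately show "max (a1 y) (a2 y) \<le> a4 y" by simp
  qed
  have nupt: "conj_fun h1 (a3 y) + conj_fun h1 (a4 y) \<le> conj_fun h1 (a1 y) + conj_fun h1 (a2 y)" for y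
  proof -
    have "conj_fun h1 (a3 y) \<le> conj_fun h1 (min (a1 y) (a2 y))" by (rule conj_mono[OF h1 a3le])
    moreover have "conj_fun h1 (min (a1 y) (a2 y)) + conj_fun h1 (max (a1 y) (a2 y)) = conj_fun h1 (a1 y) + conj_fun h1 (a2 y)"
      by (cases "a1 y \<le> a2 y") (auto simp: min_def max_def)
    ultimately show ?thesis using a4eq[of y] by simp
  qed
  have ci1: "integrable \<nu> (\<lambda>y. conj_fun h1 (a1 y))" by (rule icont[OF nu cB conj_comp_cont[OF h1 a1c]])
  have ci2: "integrable \<nu> (\<lambda>y. conj_fun h1 (a2 y))" by (rule icont[OF nu cB conj_comp_cont[OF h1 a2c]])
  have ci3: "integrable \<nu> (\<lambda>y. conj_fun h1 (a3 y))" by (rule icont[OF nu cB conj_comp_cont[OF h1 a3c]])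
  have ci4: "integrable \<nu> (\<lambda>y. conj_fun h1 (a4 y))" by (rule icont[OF nu cB conj_comp_cont[OF h1 a4c]])
  have nugap: "(\<integral>y. conj_fun h1 (a3 y) \<partial>\<nu>) + (\<integral>y. conj_fun h1 (a4 y) \<partial>\<nu>)
      \<le> (\<integral>y. conj_fun h1 (a1 y) \<partial>\<nu>) + (\<integral>y. conj_fun h1 (a2 y) \<partial>\<nu>)"
  proof -
    have "(\<integral>y. conj_fun h1 (a3 y) \<partial>\<nu>) + (\<integral>y. conj_fun h1 (a4 y) \<partial>\<nu>) = (\<integral>y. conj_fun h1 (a3 y) + conj_fun h1 (a4 y) \<partial>\<nu>)"
      by (rule Bochner_Integration.integral_add[symmetric, OF ci3 ci4])
    also have "\<dots> \<le> (\<integral>y. conj_fun h1 (a1 y) + conj_fun h1 (a2 y) \<partial>\<nu>)"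
      by (rule integral_mono) (use ci1 ci2 ci3 ci4 nupt in auto)
    also have "\<dots> = (\<integral>y. conj_fun h1 (a1 y) \<partial>\<nu>) + (\<integral>y. conj_fun h1 (a2 y) \<partial>\<nu>)"
      by (rule Bochner_Integration.integral_add[OF ci1 ci2])
    finally show ?thesis .
  qed
  have Fi11: "integrable \<mu>1 (\<lambda>x. F (\<phi>1 x))" by (rule icont[OF m1 cA Fcont[OF p1c]])
  have Fi22: "integrable \<mu>2 (\<lambda>x. F (\<phi>2 x))" by (rule icont[OF m2 cA Fcont[OF p2c]])
  have gi1: "integrable \<mu>1 g" by (rule icont[OF m1 cA gc])
  have gi2: "integrable \<mu>2 g" by (rule icont[OF m2 cA gc])
  have I1: "(\<integral>x. F (\<psi> x) \<partial>\<mu>1) = (\<integral>x. F (\<phi>1 x) \<partial>\<mu>1) - (\<integral>x. g x \<partial>\<mu>1)"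
    unfolding Fpsi by (rule Bochner_Integration.integral_diff[OF Fi11 gi1])
  have I2: "(\<integral>x. F (\<xi> x) \<partial>\<mu>2) = (\<integral>x. F (\<phi>2 x) \<partial>\<mu>2) + (\<integral>x. g x \<partial>\<mu>2)"
    unfolding Fchi by (rule Bochner_Integration.integral_add[OF Fi22 gi2])
  obtain Kg where Kg: "\<And>x. \<bar>g x\<bar> \<le> Kg" using cont_bound[OF cA gc] by blast
  have gm: "g \<in> borel_measurable borel" by (rule borel_measurable_continuous_onI[OF gc])
  have mugap: "(\<integral>x. g x \<partial>\<mu>1) \<le> (\<integral>x. g x \<partial>\<mu>2)"
    by (rule cmp[OF m1 m2 Ub ord gm gnn Kg gout])
  have w1: "ereal (dual_fun h0 h1 c \<mu>1 \<nu> \<psi>) \<le> UT h0 h1 c \<mu>1 \<nu>" by (rule WD[OF cA cB cc h0 h1 m1 nu psic])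
  have w2: "ereal (dual_fun h0 h1 c \<mu>2 \<nu> \<xi>) \<le> UT h0 h1 c \<mu>2 \<nu>" by (rule WD[OF cA cB cc h0 h1 m2 nu chic])
  have w1': "dual_fun h0 h1 c \<mu>1 \<nu> \<psi> \<le> dual_fun h0 h1 c \<mu>1 \<nu> \<phi>1" using w1 unfolding eq1[symmetric] by simp
  have w2': "dual_fun h0 h1 c \<mu>2 \<nu> \<xi> \<le> dual_fun h0 h1 c \<mu>2 \<nu> \<phi>2" using w2 unfolding eq2[symmetric] by simp
  have dd: "dual_fun h0 h1 c \<mu>1 \<nu> \<psi> + dual_fun h0 h1 c \<mu>2 \<nu> \<xi>
      = dual_fun h0 h1 c \<mu>1 \<nu> \<phi>1 + dual_fun h0 h1 c \<mu>2 \<nu> \<phi>2 + ((\<integral>x. g x \<partial>\<mu>2) - (\<integral>x. g x \<partial>\<mu>1))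
        + (((\<integral>y. conj_fun h1 (a1 y) \<partial>\<nu>) + (\<integral>y. conj_fun h1 (a2 y) \<partial>\<nu>))
           - ((\<integral>y. conj_fun h1 (a3 y) \<partial>\<nu>) + (\<integral>y. conj_fun h1 (a4 y) \<partial>\<nu>)))"
    unfolding dualF I1 I2 a1_def[symmetric] a2_def[symmetric] a3_def a4_def by simp
  have E1: "dual_fun h0 h1 c \<mu>1 \<nu> \<psi> = dual_fun h0 h1 c \<mu>1 \<nu> \<phi>1"
    using dd w1' w2' nugap mugap by linarith
  have E2: "dual_fun h0 h1 c \<mu>2 \<nu> \<xi> = dual_fun h0 h1 c \<mu>2 \<nu> \<phi>2"
    using dd w1' w2' nugap mugap by linarith
  have G0: "(\<integral>x. g x \<partial>\<mu>1) = (\<integral>x. g x \<partial>\<mu>2)"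
    using dd w1' w2' nugap mugap by linarith
  have P1: "\<psi> \<in> Phi h0 h1 c \<mu>1 \<nu>" using psic E1 eq1 by (simp add: Phi_def)
  have P2: "\<xi> \<in> Phi h0 h1 c \<mu>2 \<nu>" using chic E2 eq2 by (simp add: Phi_def)
  have P3: "F (\<phi>1 x) \<le> F (\<phi>2 x)" if x: "x \<in> supp_diff \<mu>2 \<mu>1" for x
  proof (rule ccontr)
    assume "\<not> F (\<phi>1 x) \<le> F (\<phi>2 x)"
    then have lt: "F (\<phi>2 x) < F (\<phi>1 x)" by simp
    have ph: "\<phi>2 x < \<phi>1 x" using Fmono[of "\<phi>1 x" "\<phi>2 x"] lt by (meson not_le)
    have gx: "g x = F (\<phi>1 x) - F (\<phi>2 x)" unfolding g_def \<xi>_def using ph by simp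
    define \<delta> where "\<delta> = g x / 2"
    have dpos: "\<delta> > 0" unfolding \<delta>_def using gx lt by simp
    define V where "V = {z. \<delta> < g z}"
    have Vo: "open V" unfolding V_def by (rule open_Collect_less) (intro continuous_intros gc)+
    have xV: "x \<in> V" unfolding V_def \<delta>_def using gx lt by simp
    have VU: "V \<subseteq> U"
    proof
      fix z assume "z \<in> V"
      then have "\<delta> < g z" by (simp add: V_def)
      then show "z \<in> U" using gout[of z] dpos by (cases "z \<in> U") auto
    qed
    have tv: "tot_var \<mu>2 \<mu>1 V > 0" using x Vo xV unfolding supp_diff_def by blast
    have "\<exists>A. A \<in> sets borel \<and> A \<subseteq> V \<and> measure \<mu>2 A \<noteq> measure \<mu>1 A"
    proof (rule ccontr)
      assume na: "\<not> (\<exists>A. A \<in> sets borel \<and> A \<subseteq> V \<and> measure \<mu>2 A \<noteq> measure \<mu>1 A)"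
      define Ps where "Ps = {P. finite P \<and> P \<subseteq> sets borel \<and> disjoint P \<and> \<Union>P = V}"
      have "{V} \<in> Ps" unfolding Ps_def using Vo by (auto simp: disjoint_def)
      then have ne: "Ps \<noteq> {}" by blast
      have z: "(\<Sum>A\<in>P. \<bar>measure \<mu>2 A - measure \<mu>1 A\<bar>) = 0" if "P \<in> Ps" for P
      proof (rule sum.neutral, rule ballI)
        fix A assume "A \<in> P"
        then have "A \<in> sets borel" "A \<subseteq> V" using that unfolding Ps_def by auto
        then show "\<bar>measure \<mu>2 A - measure \<mu>1 A\<bar> = 0" using na by auto
      qed
      have "tot_var \<mu>2 \<mu>1 V = (SUP P\<in>Ps. (0::real))"
        unfolding tot_var_def Ps_def[symmetric] by (rule SUP_cong) (use z in auto)
      also have "\<dots> = 0" using ne by simp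
      finally show False using tv by simp
    qed
    then obtain A where A: "A \<in> sets borel" "A \<subseteq> V" "measure \<mu>2 A \<noteq> measure \<mu>1 A" by blast
    have f1: "finite_measure \<mu>1" and s1: "sets \<mu>1 = sets borel" using m1 by (auto simp: fin_borel_measures_def)
    have f2: "finite_measure \<mu>2" and s2: "sets \<mu>2 = sets borel" using m2 by (auto simp: fin_borel_measures_def)
    have "emeasure \<mu>1 A \<le> emeasure \<mu>2 A" using ord A VU by blast
    then have "ennreal (measure \<mu>1 A) \<le> ennreal (measure \<mu>2 A)"
      by (simp add: finite_measure.emeasure_eq_measure[OF f1] finite_measure.emeasure_eq_measure[OF f2])
    then have "measure \<mu>1 A \<le> measure \<mu>2 A" by simp
    with A(3) have mlt: "measure \<mu>1 A < measure \<mu>2 A" by simp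
    define k where "k z = g z - \<delta> * indicator A z" for z
    have knn: "0 \<le> k z" for z
    proof (cases "z \<in> A")
      case True
      then have "\<delta> < g z" using A(2) by (auto simp: V_def)
      then show ?thesis using True by (simp add: k_def)
    next
      case False
      then show ?thesis using gnn[of z] by (simp add: k_def)
    qed
    have kb: "\<bar>k z\<bar> \<le> Kg + \<delta>" for z
      using Kg[of z] dpos by (auto simp: k_def indicator_def)
    have kout: "k z = 0" if "z \<notin> U" for z
      using that gout[of z] A(2) VU by (auto simp: k_def indicator_def)
    have im: "(\<lambda>z. \<delta> * indicator A z) \<in> borel_measurable borel"
      by (intro borel_measurable_times borel_measurable_const borel_measurable_indicator A(1))
    have km: "k \<in> borel_measurable borel" unfolding k_def
      by (intro borel_measurable_diff gm im)
    have ck: "(\<integral>z. k z \<partial>\<mu>1) \<le> (\<integral>z. k z \<partial>\<mu>2)"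
      by (rule cmp[OF m1 m2 Ub ord km knn kb kout])
    have ib: "\<bar>\<delta> * indicator A z\<bar> \<le> \<delta>" for z using dpos by (auto simp: indicator_def)
    have ii1: "integrable \<mu>1 (\<lambda>z. \<delta> * indicator A z)"
      by (rule int_bound[OF f1 _ ib]) (simp add: measurable_cong_sets[OF s1 refl] im)
    have ii2: "integrable \<mu>2 (\<lambda>z. \<delta> * indicator A z)"
      by (rule int_bound[OF f2 _ ib]) (simp add: measurable_cong_sets[OF s2 refl] im)
    have sp1: "space \<mu>1 = UNIV" using sets_eq_imp_space_eq[OF s1] by simp
    have sp2: "space \<mu>2 = UNIV" using sets_eq_imp_space_eq[OF s2] by simp
    have k1: "(\<integral>z. k z \<partial>\<mu>1) = (\<integral>z. g z \<partial>\<mu>1) - \<delta> * measure \<mu>1 A"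
      unfolding k_def using Bochner_Integration.integral_diff[OF gi1 ii1] sp1 by simp
    have k2: "(\<integral>z. k z \<partial>\<mu>2) = (\<integral>z. g z \<partial>\<mu>2) - \<delta> * measure \<mu>2 A"
      unfolding k_def using Bochner_Integration.integral_diff[OF gi2 ii2] sp2 by simp
    have "\<delta> * measure \<mu>1 A < \<delta> * measure \<mu>2 A" using mlt dpos by simp
    then show False using ck k1 k2 G0 by linarith
  qed
  show ?thesis using P1 P2 P3 unfolding \<psi>_def \<xi>_def F_def by blast
qed

end
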